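(* Let $T:\mathbf{Set}\to\mathbf{Set}$ be a functor, let $\lambda/n$ and $\lambda'/n'$ be monotone singleton-preserving predicate liftings for $T$, let $S$ be an equivalence relation on a set $X$, let $A_1,\dots,A_n\subseteq X$ each be an $S$-equivalence class or empty, and let $B_1,\dots,B_{n'}\subseteq X$ be $S$-closed (unions of $S$-equivalence classes). Then: (1) $\lambda_X(A_1,\dots,A_n)\subseteq\lambda'_X(B_1,\dots,B_{n'})$ or $\lambda_X(A_1,\dots,A_n)\cap\lambda'_X(B_1,\dots,B_{n'})=\varnothing$. (2) If moreover each $B_j$ is an $S$-equivalence class or empty, then $\lambda_X(A_1,\dots,A_n)=\lambda'_X(B_1,\dots,B_{n'})$ or $\lambda_X(A_1,\dots,A_n)\cap\lambda'_X(B_1,\dots,B_{n'})=\varnothing$.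
   Context: An $n$-ary predicate lifting for $T$ is a family $\lambda_X:(\mathcal{P}X)^n\to\mathcal{P}(TX)$ natural w.r.t. preimages: $\lambda_X(f^{-1}[A_1],\dots,f^{-1}[A_n])=(Tf)^{-1}[\lambda_Y(A_1,\dots,A_n)]$ for every $f:X\to Y$ and $A_i\subseteq Y$. It is monotone if each $\lambda_X$ is monotone w.r.t. inclusion in every argument, and preserves singletons if $|\lambda_X(\{x_1\},\dots,\{x_n\})|=1$ for all sets $X$ and $x_1,\dots,x_n\in X$. *)

theory Defs
  imports "HOL-Library.FuncSet"
begin

text \<open>A functor Set to Set, represented on the category whose objects are the
subsets X of a (arbitrary) ambient type 'a and whose morphisms X -> Y are
set-theoretic functions (functions agreeing on X are identified).
Tob X is the set T X (inside an ambient type 'b) and Tmap X Y f is T f.\<close>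

definition set_functor ::
  "('a set \<Rightarrow> 'b set) \<Rightarrow> ('a set \<Rightarrow> 'a set \<Rightarrow> ('a \<Rightarrow> 'a) \<Rightarrow> 'b \<Rightarrow> 'b) \<Rightarrow> bool" where
  "set_functor Tob Tmap \<longleftrightarrow>
     (\<forall>X Y f. f \<in> X \<rightarrow> Y \<longrightarrow> Tmap X Y f \<in> Tob X \<rightarrow> Tob Y) \<and>
     (\<forall>X Y f g. f \<in> X \<rightarrow> Y \<longrightarrow> (\<forall>x\<in>X. f x = g x) \<longrightarrow>
        (\<forall>t\<in>Tob X. Tmap X Y f t = Tmap X Y g t)) \<and>
     (\<forall>X. \<forall>t\<in>Tob X. Tmap X X id t = t) \<and>
     (\<forall>X Y Z f g. f \<in> X \<rightarrow> Y \<longrightarrow> g \<in> Y \<rightarrow> Z \<longrightarrow>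
        (\<forall>t\<in>Tob X. Tmap X Z (g \<circ> f) t = Tmap Y Z g (Tmap X Y f t)))"

definition predicate_lifting ::
  "('a set \<Rightarrow> 'b set) \<Rightarrow> ('a set \<Rightarrow> 'a set \<Rightarrow> ('a \<Rightarrow> 'a) \<Rightarrow> 'b \<Rightarrow> 'b) \<Rightarrow> nat
     \<Rightarrow> ('a set \<Rightarrow> 'a set list \<Rightarrow> 'b set) \<Rightarrow> bool" where
  "predicate_lifting Tob Tmap n lam \<longleftrightarrow>
     (\<forall>X As. length As = n \<longrightarrow> (\<forall>A\<in>set As. A \<subseteq> X) \<longrightarrow> lam X As \<subseteq> Tob X) \<and>
     (\<forall>X Y f As. f \<in> X \<rightarrow> Y \<longrightarrow> length As = n \<longrightarrow> (\<forall>A\<in>set As. A \<subseteq> Y) \<longrightarrow>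
        lam X (map (\<lambda>A. f -` A \<inter> X) As) = {t \<in> Tob X. Tmap X Y f t \<in> lam Y As})"

definition monotone_lifting :: "nat \<Rightarrow> ('a set \<Rightarrow> 'a set list \<Rightarrow> 'b set) \<Rightarrow> bool" where
  "monotone_lifting n lam \<longleftrightarrow>
     (\<forall>X As Bs. length As = n \<longrightarrow> length Bs = n \<longrightarrow> (\<forall>B\<in>set Bs. B \<subseteq> X) \<longrightarrow>
        (\<forall>i<n. As ! i \<subseteq> Bs ! i) \<longrightarrow> lam X As \<subseteq> lam X Bs)"

definition preserves_singletons :: "nat \<Rightarrow> ('a set \<Rightarrow> 'a set list \<Rightarrow> 'b set) \<Rightarrow> bool" where
  "preserves_singletons n lam \<longleftrightarrow>
     (\<forall>X xs. length xs = n \<longrightarrow> set xs \<subseteq> X \<longrightarrow> card (lam X (map (\<lambda>x. {x}) xs)) = 1)"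

definition S_closed :: "'a set \<Rightarrow> ('a \<times> 'a) set \<Rightarrow> 'a set \<Rightarrow> bool" where
  "S_closed X S B \<longleftrightarrow> (\<exists>C \<subseteq> X // S. B = \<Union>C)"

end

theory Submission
  imports Defs
begin

lemma rep_ex:
  fixes S :: "('a \<times> 'a) set"
  assumes E: "equiv X S"
  shows "\<exists>r::'a\<Rightarrow>'a. \<forall>x\<in>X. \<forall>z\<in>X. r x = r z \<longleftrightarrow> (x,z) \<in> S"
proof -
  define r where "r = (\<lambda>x. SOME y. y \<in> S``{x})"
  have rin: "r x \<in> S``{x}" if "x \<in> X" for x
    unfolding r_def by (rule someI[of _ x]) (use equiv_class_self[OF E that] in simp)
  have "r x = r z \<longleftrightarrow> (x,z) \<in> S" if xz: "x\<in>X" "z\<in>X" for x z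
  proof
    assume "r x = r z"
    have 1: "(x, r x) \<in> S" using rin xz(1) by blast
    have "(z, r z) \<in> S" using rin xz(2) by blast
    hence 2: "(r x, z) \<in> S" using E \<open>r x = r z\<close> unfolding equiv_def by (metis symD)
    show "(x,z) \<in> S" using 1 2 E unfolding equiv_def by (meson transD)
  next
    assume "(x,z) \<in> S"
    hence "S``{x} = S``{z}" using equiv_class_eq[OF E] by blast
    thus "r x = r z" unfolding r_def by simp
  qed
  thus ?thesis by blast
qed

lemma cls_pre:
  assumes "equiv X S" and r: "\<forall>x\<in>X. \<forall>z\<in>X. r x = r z \<longleftrightarrow> (x,z) \<in> S"
    and "A \<in> X // S"
  shows "r -` {r (SOME a. a\<in>A)} \<inter> X = A" and "(SOME a. a\<in>A) \<in> X"
proof -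
  obtain a where a: "a \<in> X" "A = S``{a}" using assms(3) by (auto elim: quotientE)
  have aA: "a \<in> A" using a equiv_class_self[OF assms(1) a(1)] by simp
  hence s: "(SOME a. a\<in>A) \<in> A" by (rule someI)
  have SX: "S \<subseteq> X \<times> X" using assms(1) by (simp add: equiv_def refl_on_def)
  then show "(SOME a. a\<in>A) \<in> X" using s a by auto
  have as: "(a, SOME a. a\<in>A) \<in> S" using s a by simp
  have eq: "A = S``{SOME a. a\<in>A}" using a(2) equiv_class_eq[OF assms(1) as] by (rule trans)
  show "r -` {r (SOME a. a\<in>A)} \<inter> X = A"
  proof (rule set_eqI)
    fix x
    have sy: "(x, SOME a. a\<in>A) \<in> S \<longleftrightarrow> (SOME a. a\<in>A, x) \<in> S"
      using assms(1) unfolding equiv_def by (meson symD)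
    have "x \<in> r -` {r (SOME a. a\<in>A)} \<inter> X \<longleftrightarrow> x \<in> X \<and> (x, SOME a. a\<in>A) \<in> S"
      using r \<open>(SOME a. a\<in>A) \<in> X\<close> by blast
    also have "\<dots> \<longleftrightarrow> x \<in> S``{SOME a. a\<in>A}" using sy SX by blast
    finally show "x \<in> r -` {r (SOME a. a\<in>A)} \<inter> X \<longleftrightarrow> x \<in> A" using eq by simp
  qed
qed

lemma closed_pre:
  assumes "equiv X S" and r: "\<forall>x\<in>X. \<forall>z\<in>X. r x = r z \<longleftrightarrow> (x,z) \<in> S"
    and "S_closed X S B"
  shows "r -` (r ` B) \<inter> X = B" "B \<subseteq> X"
proof -
  obtain C where C: "C \<subseteq> X // S" "B = \<Union>C" using assms(3) unfolding S_closed_def by blast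
  show BX: "B \<subseteq> X" using C assms(1) Union_quotient by fastforce
  have "x \<in> B" if x: "x \<in> X" "b \<in> B" "r x = r b" for x b
  proof -
    obtain D where D: "D \<in> C" "b \<in> D" using C x by auto
    obtain c where c: "c \<in> X" "D = S``{c}" using D C by (auto elim: quotientE)
    have bX: "b \<in> X" using BX x(2) by blast
    have "(x,b) \<in> S" using r x(1) bX x(3) by blast
    moreover have "(c,b) \<in> S" using c D by auto
    ultimately have "(c,x) \<in> S" using assms(1)
      by (meson equiv_def symD transD)
    thus ?thesis using c D C by auto
  qed
  thus "r -` (r ` B) \<inter> X = B" using BX by auto
qed

lemma gen:
  fixes Tmap :: "'a set \<Rightarrow> 'a set \<Rightarrow> ('a \<Rightarrow> 'a) \<Rightarrow> 'b \<Rightarrow> 'b"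
  assumes PL: "predicate_lifting Tob Tmap n lam" and M: "monotone_lifting n lam"
    and PS: "preserves_singletons n lam"
    and E: "equiv X S" and r: "\<forall>x\<in>X. \<forall>z\<in>X. r x = r z \<longleftrightarrow> (x,z) \<in> S"
    and len: "length As = n" and cl: "\<forall>A\<in>set As. A \<in> X // S \<or> A = {}"
    and Y: "Y = insert y0 (r ` X)"
  shows "\<exists>L u. L \<subseteq> {u} \<and> lam X As = {t\<in>Tob X. Tmap X Y r t \<in> L}"
proof -
  define h where "h A = (if A = {} then y0 else r (SOME a. a \<in> A))" for A
  define As' where "As' = map (\<lambda>A. if A = {} then {} else {h A}) As"
  define xs where "xs = map h As"
  have hY: "h A \<in> Y" if "A \<in> set As" for A
    using that cl cls_pre(2)[OF E r] unfolding h_def Y by auto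
  have fY: "r \<in> X \<rightarrow> Y" using Y by auto
  have As'Y: "\<forall>A\<in>set As'. A \<subseteq> Y" using hY unfolding As'_def by auto
  have pre: "map (\<lambda>A. r -` A \<inter> X) As' = As"
    unfolding As'_def map_map
  proof (rule map_idI)
    fix A assume "A \<in> set As"
    thus "((\<lambda>A. r -` A \<inter> X) \<circ> (\<lambda>A. if A = {} then {} else {h A})) A = A"
      using cl cls_pre(1)[OF E r] unfolding h_def by auto
  qed
  have lenA: "length As' = n" using len unfolding As'_def by simp
  have nat: "lam X As = {t\<in>Tob X. Tmap X Y r t \<in> lam Y As'}"
  proof -
    have "lam X (map (\<lambda>A. r -` A \<inter> X) As') = {t\<in>Tob X. Tmap X Y r t \<in> lam Y As'}"
      using conjunct2[OF PL[unfolded predicate_lifting_def]] fY lenA As'Y by blast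
    thus ?thesis using pre by simp
  qed
  have sub: "lam Y As' \<subseteq> lam Y (map (\<lambda>x. {x}) xs)"
    apply (rule M[unfolded monotone_lifting_def, rule_format])
    using len hY by (auto simp: As'_def xs_def)
  have "card (lam Y (map (\<lambda>x. {x}) xs)) = 1"
    apply (rule PS[unfolded preserves_singletons_def, rule_format])
    using len hY by (auto simp: xs_def)
  then obtain u where "lam Y (map (\<lambda>x. {x}) xs) = {u}" by (meson card_1_singletonE)
  thus ?thesis using sub nat by blast
qed

theorem mainTheorem5:
  fixes Tob :: "'a set \<Rightarrow> 'b set"
    and Tmap :: "'a set \<Rightarrow> 'a set \<Rightarrow> ('a \<Rightarrow> 'a) \<Rightarrow> 'b \<Rightarrow> 'b"
    and lam lam' :: "'a set \<Rightarrow> 'a set list \<Rightarrow> 'b set"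
    and n n' :: nat
    and X :: "'a set" and S :: "('a \<times> 'a) set"
    and As Bs :: "'a set list"
  assumes "set_functor Tob Tmap"
    and "predicate_lifting Tob Tmap n lam" and "monotone_lifting n lam"
    and "preserves_singletons n lam"
    and "predicate_lifting Tob Tmap n' lam'" and "monotone_lifting n' lam'"
    and "preserves_singletons n' lam'"
    and "equiv X S"
    and "length As = n" and "\<forall>A\<in>set As. A \<in> X // S \<or> A = {}"
    and "length Bs = n'" and "\<forall>B\<in>set Bs. S_closed X S B"
  shows "(lam X As \<subseteq> lam' X Bs \<or> lam X As \<inter> lam' X Bs = {}) \<and>
         ((\<forall>B\<in>set Bs. B \<in> X // S \<or> B = {}) \<longrightarrow>
            (lam X As = lam' X Bs \<or> lam X As \<inter> lam' X Bs = {}))"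
proof -
  obtain r :: "'a \<Rightarrow> 'a" where r: "\<forall>x\<in>X. \<forall>z\<in>X. r x = r z \<longleftrightarrow> (x,z) \<in> S"
    using rep_ex[OF assms(8)] by metis
  define Y where "Y = insert undefined (r ` X)"
  obtain L u where L: "L \<subseteq> {u}" "lam X As = {t\<in>Tob X. Tmap X Y r t \<in> L}"
    using gen[OF assms(2,3,4,8) r assms(9,10) Y_def] by (elim exE conjE) metis
  define Bs' where "Bs' = map (\<lambda>B. r ` B) Bs"
  have BX: "\<forall>B\<in>set Bs. B \<subseteq> X" using closed_pre(2)[OF assms(8) r] assms(12) by blast
  have fY: "r \<in> X \<rightarrow> Y" using Y_def by auto
  have Bs'Y: "\<forall>B\<in>set Bs'. B \<subseteq> Y" using BX unfolding Bs'_def Y_def by auto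
  have pre: "map (\<lambda>A. r -` A \<inter> X) Bs' = Bs"
    unfolding Bs'_def map_map
    by (rule map_idI) (use closed_pre(1)[OF assms(8) r] assms(12) in auto)
  have lenB: "length Bs' = n'" using assms(11) unfolding Bs'_def by simp
  have L': "lam' X Bs = {t\<in>Tob X. Tmap X Y r t \<in> lam' Y Bs'}"
  proof -
    have "lam' X (map (\<lambda>A. r -` A \<inter> X) Bs') = {t\<in>Tob X. Tmap X Y r t \<in> lam' Y Bs'}"
      using conjunct2[OF assms(5)[unfolded predicate_lifting_def]] fY lenB Bs'Y by blast
    thus ?thesis using pre by simp
  qed
  have p1: "lam X As \<subseteq> lam' X Bs \<or> lam X As \<inter> lam' X Bs = {}"
  proof (cases "u \<in> lam' Y Bs'")
    case True thus ?thesis using L L' by auto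
  next
    case False thus ?thesis using L L' by auto
  qed
  have p2: "lam X As = lam' X Bs \<or> lam X As \<inter> lam' X Bs = {}"
    if cB: "\<forall>B\<in>set Bs. B \<in> X // S \<or> B = {}"
  proof -
    obtain L2 u2 where L2: "L2 \<subseteq> {u2}" "lam' X Bs = {t\<in>Tob X. Tmap X Y r t \<in> L2}"
      using gen[OF assms(5,6,7,8) r assms(11) cB Y_def] by (elim exE conjE) metis
    show ?thesis
    proof (cases "L = {}")
      case True thus ?thesis using L by auto
    next
      case False
      hence Lu: "L = {u}" using L by auto
      show ?thesis
      proof (cases "L2 = {}")
        case True thus ?thesis using L2 by auto
      next
        case False
        hence "L2 = {u2}" using L2 by auto
        thus ?thesis using Lu L L2 by (cases "u = u2") auto
      qed
    qed
  qed
  show ?thesis using p1 p2 by blast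
qed

end
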